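(* Let $\alpha,\beta>0$ and $0<\delta\le1$, and let the inverse demand function be $p(q)=\max\{\alpha-\beta q^{\delta},0\}$ for $q\ge0$. Suppose the cost functions satisfy Assumptions 1, 3 and 4. Then every Cournot equilibrium $\mathbf{x}$ satisfies $\gamma(\mathbf{x})\ge f\big((\delta+1)^{(1-\delta)/\delta}\big)$.
   Context: Cournot model: $N$ suppliers, inverse demand $p$, supplier $n$ has cost $C_n:[0,\infty)\to[0,\infty)$ and chooses $x_n\ge0$; $X=\sum_n x_n$; payoff of $n$ is $x_np(X)-C_n(x_n)$. A Cournot equilibrium is a profile $\mathbf{x}\ge0$ such that no supplier can increase its payoff by unilaterally changing its quantity to any $x\ge0$. $C_n'(0)$ is the right derivative at $0$. Assumption 1: each $C_n$ is convex, continuous, nondecreasing on $[0,\infty)$, continuously differentiable on $(0,\infty)$, with $C_n(0)=0$. Assumption 3: there exists $R>0$ such that $p(R)\le\min_n C_n'(0)$. Assumption 4: $p(0)>\min_n C_n'(0)$. Social welfare of $\mathbf{x}\ge0$: $W(\mathbf{x})=\int_0^X p(q)\,dq-\sum_{n=1}^N C_n(x_n)$; a social optimum $\mathbf{x}^S$ maximizes $W$. Efficiency: $\gamma(\mathbf{x})=W(\mathbf{x})/W(\mathbf{x}^S)$. For $\overline c\ge1$: $f(\overline c)=\dfrac{\phi^2+2}{\phi^2+2\phi+\overline c}$ with $\phi=\max\left\{\dfrac{2-\overline c+\sqrt{\overline c^{\,2}-4\overline c+12}}{2},1\right\}$. *)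

theory Defs
  imports "HOL-Analysis.Analysis"
begin

(* Suppliers are indexed by n \<in> {..<N}; a profile is x :: nat \<Rightarrow> real,
   only its values on {..<N} matter. Costs: C :: nat \<Rightarrow> real \<Rightarrow> real. *)

definition total :: "nat \<Rightarrow> (nat \<Rightarrow> real) \<Rightarrow> real" where
  "total N x = (\<Sum>n<N. x n)"

definition feasible :: "nat \<Rightarrow> (nat \<Rightarrow> real) \<Rightarrow> bool" where
  "feasible N x \<longleftrightarrow> (\<forall>n<N. 0 \<le> x n)"

definition payoff :: "(real \<Rightarrow> real) \<Rightarrow> (nat \<Rightarrow> real \<Rightarrow> real) \<Rightarrow> nat \<Rightarrow> (nat \<Rightarrow> real) \<Rightarrow> nat \<Rightarrow> real" where
  "payoff p C N x n = x n * p (total N x) - C n (x n)"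

definition cournot_equilibrium :: "(real \<Rightarrow> real) \<Rightarrow> (nat \<Rightarrow> real \<Rightarrow> real) \<Rightarrow> nat \<Rightarrow> (nat \<Rightarrow> real) \<Rightarrow> bool" where
  "cournot_equilibrium p C N x \<longleftrightarrow> feasible N x \<and>
     (\<forall>n<N. \<forall>y::real. 0 \<le> y \<longrightarrow> payoff p C N (x(n := y)) n \<le> payoff p C N x n)"

definition right_deriv0 :: "(real \<Rightarrow> real) \<Rightarrow> real" where
  "right_deriv0 c = (THE d. (c has_real_derivative d) (at_right 0))"

definition assumption1 :: "(nat \<Rightarrow> real \<Rightarrow> real) \<Rightarrow> nat \<Rightarrow> bool" where
  "assumption1 C N \<longleftrightarrow> (\<forall>n<N.
      convex_on {0..} (C n) \<and> continuous_on {0..} (C n) \<and> mono_on {0..} (C n) \<and>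
      (\<forall>x>0. C n differentiable at x) \<and> continuous_on {0<..} (deriv (C n)) \<and>
      C n 0 = 0)"

definition min_marginal0 :: "(nat \<Rightarrow> real \<Rightarrow> real) \<Rightarrow> nat \<Rightarrow> real" where
  "min_marginal0 C N = (MIN n\<in>{..<N}. right_deriv0 (C n))"

definition assumption3 :: "(real \<Rightarrow> real) \<Rightarrow> (nat \<Rightarrow> real \<Rightarrow> real) \<Rightarrow> nat \<Rightarrow> bool" where
  "assumption3 p C N \<longleftrightarrow> (\<exists>R>0. p R \<le> min_marginal0 C N)"

definition assumption4 :: "(real \<Rightarrow> real) \<Rightarrow> (nat \<Rightarrow> real \<Rightarrow> real) \<Rightarrow> nat \<Rightarrow> bool" where
  "assumption4 p C N \<longleftrightarrow> p 0 > min_marginal0 C N"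

definition welfare :: "(real \<Rightarrow> real) \<Rightarrow> (nat \<Rightarrow> real \<Rightarrow> real) \<Rightarrow> nat \<Rightarrow> (nat \<Rightarrow> real) \<Rightarrow> real" where
  "welfare p C N x = integral {0..total N x} p - (\<Sum>n<N. C n (x n))"

definition social_optimum :: "(real \<Rightarrow> real) \<Rightarrow> (nat \<Rightarrow> real \<Rightarrow> real) \<Rightarrow> nat \<Rightarrow> (nat \<Rightarrow> real) \<Rightarrow> bool" where
  "social_optimum p C N xS \<longleftrightarrow> feasible N xS \<and>
     (\<forall>y. feasible N y \<longrightarrow> welfare p C N y \<le> welfare p C N xS)"

definition efficiency :: "(real \<Rightarrow> real) \<Rightarrow> (nat \<Rightarrow> real \<Rightarrow> real) \<Rightarrow> nat \<Rightarrow> (nat \<Rightarrow> real) \<Rightarrow> (nat \<Rightarrow> real) \<Rightarrow> real" where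
  "efficiency p C N xS x = welfare p C N x / welfare p C N xS"

definition phi_fun :: "real \<Rightarrow> real" where
  "phi_fun c = max ((2 - c + sqrt (c\<^sup>2 - 4 * c + 12)) / 2) 1"

definition f_bound :: "real \<Rightarrow> real" where
  "f_bound c = ((phi_fun c)\<^sup>2 + 2) / ((phi_fun c)\<^sup>2 + 2 * phi_fun c + c)"

end

theory Submission
  imports Defs
begin

lemma powr_tangent:
  fixes d u v :: real
  assumes d: "0 < d" "d \<le> 1" and u: "0 < u" and v: "0 < v"
  shows "v powr d \<le> u powr d + d * u powr (d - 1) * (v - u)"
proof -
  have cv: "convex_on {0<..} (\<lambda>t. - (t powr d))"
  proof (rule convex_on_realI[where f' = "\<lambda>t. - (d * t powr (d - 1))"])
    show "connected ({0<..} :: real set)" by simp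
    fix t :: real assume "t \<in> {0<..}"
    then show "((\<lambda>t. - (t powr d)) has_real_derivative - (d * t powr (d - 1))) (at t)"
      by (auto intro!: derivative_eq_intros has_real_derivative_powr)
  next
    fix x y :: real assume "x \<in> {0<..}" "y \<in> {0<..}" "x \<le> y"
    then have "y powr (d - 1) \<le> x powr (d - 1)" using d by (intro powr_mono2') auto
    then show "- (d * x powr (d - 1)) \<le> - (d * y powr (d - 1))" using d by (simp add: mult_left_mono)
  qed
  have "- (v powr d) - - (u powr d) \<ge> - (d * u powr (d - 1)) * (v - u)"
    using u v
    by (intro convex_on_imp_above_tangent[OF cv])
       (auto simp: interior_open intro!: derivative_eq_intros has_real_derivative_powr[THEN DERIV_subset])
  then show ?thesis by (simp add: algebra_simps)
qed

lemma fbound_le: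
  fixes c ph :: real
  assumes c: "0 < c" and ph: "1 \<le> ph"
  shows "f_bound c \<le> (ph^2 + 2) / (ph^2 + 2*ph + c)"
proof -
  define S where "S = sqrt (c\<^sup>2 - 4 * c + 12)"
  define r where "r = (2 - c + S) / 2"
  have nn: "0 \<le> c\<^sup>2 - 4 * c + 12"
  proof -
    have "c\<^sup>2 - 4 * c + 12 = (c-2)^2 + 8" by (simp add: power2_eq_square algebra_simps)
    moreover have "(c-2)^2 \<ge> 0" by simp
    ultimately show "0 \<le> c\<^sup>2 - 4 * c + 12" by linarith
  qed
  have S2: "S^2 = c\<^sup>2 - 4 * c + 12" unfolding S_def using nn by simp
  have S0: "S \<ge> 0" unfolding S_def using nn by simp
  have root: "r^2 + (c - 2) * r - 2 = 0" unfolding r_def using S2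
    by (simp add: power2_eq_square field_simps)
  have den: "ph^2 + 2*ph + c > 0" using ph c by (simp add: add_pos_nonneg add_pos_pos)
  show ?thesis
  proof (cases "r \<ge> 1")
    case True
    then have pf: "phi_fun c = r" unfolding phi_fun_def r_def S_def by (simp add: max_def)
    have denr: "r^2 + 2*r + c > 0" using True c by (simp add: add_pos_nonneg add_pos_pos)
    have i1: "(r^2+2)*(r+1) - r*(r^2+2*r+c) = -(r^2 + (c-2)*r - 2)" by algebra
    have i2: "(ph^2+2)*(r+1) - r*(ph^2+2*ph+c) = (ph-r)^2 - (r^2 + (c-2)*r - 2)" by algebra
    have fr: "f_bound c = r / (r+1)" unfolding f_bound_def pf using i1 root denr True
      by (simp add: divide_eq_eq field_simps)
    have "(ph-r)^2 \<ge> 0" by simp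
    then have "r * (ph^2+2*ph+c) \<le> (ph^2+2)*(r+1)" using i2 root by linarith
    then show ?thesis unfolding fr using den True
      by (simp add: divide_le_eq le_divide_eq mult.commute)
  next
    case False
    then have pf: "phi_fun c = 1" unfolding phi_fun_def r_def S_def by (simp add: max_def)
    have "S < c" using False unfolding r_def by simp
    then have "S^2 < c^2" using S0 by (simp add: power_strict_mono)
    then have c3: "c > 3" using S2 by simp
    have "(ph^2 + 2) * (3 + c) - 3 * (ph^2 + 2*ph + c) = (ph - 1) * (c*ph + c - 6)"
      by (simp add: power2_eq_square algebra_simps)
    moreover have "(ph - 1) * (c*ph + c - 6) \<ge> 0"
    proof -
      have "c * ph \<ge> c * 1" using ph c by (intro mult_left_mono) auto
      then have "c*ph + c - 6 \<ge> 0" using c3 by linarith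
      then show ?thesis using ph by (intro mult_nonneg_nonneg) auto
    qed
    ultimately have "3 * (ph^2 + 2*ph + c) \<le> (ph^2 + 2) * (3 + c)" by simp
    then show ?thesis unfolding f_bound_def pf using den c
      by (simp add: divide_le_eq le_divide_eq mult.commute)
  qed
qed

lemma fbound_le1:
  fixes c :: real
  assumes c: "0 < c"
  shows "f_bound c \<le> 1"
proof -
  have "phi_fun c \<ge> 1" unfolding phi_fun_def by simp
  then show ?thesis unfolding f_bound_def using c
    by (simp add: divide_le_eq add_pos_pos add_pos_nonneg)
qed

lemma p_cont:
  fixes a b d :: real
  assumes "0 < d"
  shows "continuous_on {0..} (\<lambda>q. max (a - b * q powr d) 0)"
proof -
  have "continuous_on {0..} (\<lambda>q::real. q powr d)"
    using assms by (intro continuous_on_powr') (auto intro: continuous_intros)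
  then show ?thesis by (intro continuous_on_max continuous_on_diff continuous_on_mult continuous_on_const)
qed

lemma P_explicit:
  fixes a b d q :: real
  assumes d: "0 < d" and b: "0 < b" and q: "0 \<le> q" and pos: "a - b * q powr d \<ge> 0"
  shows "integral {0..q} (\<lambda>q. max (a - b * q powr d) 0) = a * q - b * q powr (d + 1) / (d + 1)"
proof -
  define F where "F = (\<lambda>t::real. a * t - b * t powr (d + 1) / (d + 1))"
  have "((\<lambda>q. max (a - b * q powr d) 0) has_integral (F q - F 0)) {0..q}"
  proof (rule fundamental_theorem_of_calculus_interior_strong[where S = "{}"])
    show "finite ({}::real set)" by simp
    show "0 \<le> q" by fact
    show "continuous_on {0..q} F" unfolding F_def using d
      by (intro continuous_intros continuous_on_powr') (auto intro: continuous_intros)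
    fix t assume t: "t \<in> {0<..<q} - {}"
    then have "t powr d \<le> q powr d" using d by (intro powr_mono2) auto
    then have "b * t powr d \<le> b * q powr d" using b by (intro mult_left_mono) auto
    then have eq: "max (a - b * t powr d) 0 = a - b * t powr d" using pos
      by (simp add: max_def)
    have "(F has_real_derivative a - b * ((d+1) * t powr (d + 1 - 1)) / (d + 1)) (at t)"
      unfolding F_def using t
      by (auto intro!: derivative_eq_intros has_real_derivative_powr)
    moreover have "a - b * ((d+1) * t powr (d + 1 - 1)) / (d + 1) = a - b * t powr d"
      using d by simp
    ultimately show "(F has_vector_derivative max (a - b * t powr d) 0) (at t)"
      unfolding eq by (simp add: has_real_derivative_iff_has_vector_derivative)
  qed
  then show ?thesis unfolding F_def by (simp add: integral_unique)
qed

lemma P_opt: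
  fixes p :: "real \<Rightarrow> real" and g Ys Y :: real
  assumes pc: "continuous_on {0..} p" and Ys: "0 \<le> Ys" and Y: "0 \<le> Y"
    and ge: "\<And>q. 0 \<le> q \<Longrightarrow> q \<le> Ys \<Longrightarrow> g \<le> p q"
    and le: "\<And>q. Ys \<le> q \<Longrightarrow> p q \<le> g"
  shows "integral {0..Y} p - g * Y \<le> integral {0..Ys} p - g * Ys"
proof (cases "Y \<le> Ys")
  case True
  have int: "p integrable_on {0..Ys}"
    by (rule integrable_continuous_interval) (rule continuous_on_subset[OF pc], auto)
  have int2: "p integrable_on {Y..Ys}"
    by (rule integrable_continuous_interval) (rule continuous_on_subset[OF pc], use Y in auto)
  have c: "integral {0..Y} p + integral {Y..Ys} p = integral {0..Ys} p"
    using True Y int by (intro Henstock_Kurzweil_Integration.integral_combine) auto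
  have "integral {Y..Ys} (\<lambda>_. g) \<le> integral {Y..Ys} p"
    using int2 ge Y by (intro integral_le) auto
  then have "g * (Ys - Y) \<le> integral {Y..Ys} p" using True by (simp add: mult.commute)
  then show ?thesis using c by (simp add: algebra_simps)
next
  case False
  have int: "p integrable_on {0..Y}"
    by (rule integrable_continuous_interval) (rule continuous_on_subset[OF pc], auto)
  have int2: "p integrable_on {Ys..Y}"
    by (rule integrable_continuous_interval) (rule continuous_on_subset[OF pc], use Ys in auto)
  have c: "integral {0..Ys} p + integral {Ys..Y} p = integral {0..Y} p"
    using False Ys int by (intro Henstock_Kurzweil_Integration.integral_combine) auto
  have "integral {Ys..Y} p \<le> integral {Ys..Y} (\<lambda>_. g)"
    using int2 le by (intro integral_le) auto
  then have "integral {Ys..Y} p \<le> g * (Y - Ys)" using False by (simp add: mult.commute)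
  then show ?thesis using c by (simp add: algebra_simps)
qed

lemma trapezoid:
  fixes d X Y :: real
  assumes d: "0 < d" "d \<le> 1" and X: "0 < X" and XY: "X \<le> Y"
  shows "(Y - X) * (Y powr d + X powr d) / 2 \<le> (Y powr (d+1) - X powr (d+1)) / (d+1)"
proof -
  define k where "k = 1 / (d+1)"
  have k: "k * (d + 1) = 1" unfolding k_def using d by simp
  define F where "F = (\<lambda>t. (t powr (d+1) - X powr (d+1)) * k - (t - X) * (t powr d + X powr d) * (1/2))"
  have "F X \<le> F Y"
  proof (rule DERIV_nonneg_imp_increasing_open[OF XY])
    fix t assume t: "X < t" "t < Y"
    then have t0: "0 < t" using X by simp
    have tt: "t * t powr (d - 1) = t powr d"
      using t0 by (simp add: powr_diff field_simps)
    have D: "(F has_real_derivative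
        ((d+1) * t powr (d + 1 - 1)) * k - ((t powr d + X powr d) + (t - X) * (d * t powr (d - 1))) * (1/2)) (at t)"
      unfolding F_def using t0 d
      by (auto intro!: derivative_eq_intros has_real_derivative_powr simp: algebra_simps)
    have tan: "X powr d \<le> t powr d + d * t powr (d - 1) * (X - t)"
      using powr_tangent[OF d t0 X] .
    have "((d+1) * t powr (d + 1 - 1)) * k - ((t powr d + X powr d) + (t - X) * (d * t powr (d - 1))) * (1/2)
        = ((t powr d - X powr d) - d * t powr (d - 1) * (t - X)) / 2"
    proof -
      have kk: "((d+1) * t powr (d + 1 - 1)) * k = t powr d"
      proof -
        have "((d+1) * t powr (d + 1 - 1)) * k = (k * (d+1)) * t powr d" by simp
        then show ?thesis using k by simp
      qed
      show ?thesis unfolding kk by (simp add: algebra_simps)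
    qed
    also have "\<dots> \<ge> 0" using tan by (simp add: algebra_simps)
    finally show "\<exists>y. (F has_real_derivative y) (at t) \<and> 0 \<le> y" using D by blast
  next
    show "continuous_on {X..Y} F" unfolding F_def using X
      by (intro continuous_intros) auto
  qed
  then show ?thesis unfolding F_def k_def by (simp add: field_simps)
qed

lemma convex_quot_mono:
  fixes C :: "real \<Rightarrow> real"
  assumes cv: "convex_on {0..} C" and C0: "C 0 = 0" and a: "0 < a" and ab: "a \<le> b"
  shows "C a \<le> (a / b) * C b"
proof -
  have b: "0 < b" using a ab by simp
  have "C ((1 - a/b) *\<^sub>R 0 + (a/b) *\<^sub>R b) \<le> (1 - a/b) * C 0 + (a/b) * C b"
    using a b ab by (intro convex_onD[OF cv]) (auto simp: divide_le_eq)
  then show ?thesis using C0 b by simp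
qed

lemma rd0:
  fixes C :: "real \<Rightarrow> real"
  assumes cv: "convex_on {0..} C" and mo: "mono_on {0..} C" and C0: "C 0 = 0"
  shows "(C has_real_derivative right_deriv0 C) (at_right 0)"
proof -
  define Q where "Q = (\<lambda>y. (C y - C 0) / (y - 0))"
  have lim: "(Q \<longlongrightarrow> Inf (Q ` ({0<..} \<inter> {0<..}))) (at 0 within ({0<..} \<inter> {0<..}))"
  proof (rule Lim_right_bound[where K = 0])
    fix a b :: real assume "a \<in> {0<..}" "b \<in> {0<..}" "0 < a" "a \<le> b"
    then have "C a \<le> (a / b) * C b" using convex_quot_mono[OF cv C0] by auto
    then show "Q a \<le> Q b" unfolding Q_def using C0 \<open>0 < a\<close> \<open>a \<le> b\<close>
      by (simp add: divide_simps mult.commute)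
  next
    fix a :: real assume "a \<in> {0<..}" "0 < a"
    then have "C 0 \<le> C a" using mono_onD[OF mo] by auto
    then show "0 \<le> Q a" unfolding Q_def using C0 \<open>0 < a\<close> by simp
  qed
  define d where "d = Inf (Q ` ({0<..} \<inter> {0<..}))"
  have D: "(C has_real_derivative d) (at_right 0)"
    unfolding has_field_derivative_iff using lim unfolding Q_def d_def by simp
  have "right_deriv0 C = d" unfolding right_deriv0_def
  proof (rule the_equality)
    show "(C has_real_derivative d) (at_right 0)" by fact
    fix e assume "(C has_real_derivative e) (at_right 0)"
    then have "((\<lambda>y. (C y - C 0) / (y - 0)) \<longlongrightarrow> e) (at_right 0)"
      unfolding has_field_derivative_iff .
    moreover have "((\<lambda>y. (C y - C 0) / (y - 0)) \<longlongrightarrow> d) (at_right 0)"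
      using D unfolding has_field_derivative_iff .
    ultimately show "e = d" by (intro tendsto_unique) auto
  qed
  then show ?thesis using D by simp
qed

lemma powr_le_iff_base:
  fixes q y d :: real
  assumes "0 < d" "0 \<le> q" "0 \<le> y"
  shows "q powr d \<le> y powr d \<longleftrightarrow> q \<le> y"
  using assms powr_mono2[of d q y] powr_less_mono2[of d y q] by (auto simp: not_le[symmetric])

lemma powr_less_iff_base:
  fixes q y d :: real
  assumes "0 < d" "0 \<le> q" "0 \<le> y"
  shows "q powr d < y powr d \<longleftrightarrow> q < y"
  using powr_le_iff_base[OF assms(1,3,2)] by (simp add: not_le[symmetric])

lemma total_upd:
  assumes "n < N"
  shows "total N (x(n := y)) = total N x - x n + y"
proof -
  have f: "finite {..<N}" by simp
  have m: "n \<in> {..<N}" using assms by simp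
  have "total N (x(n := y)) = y + (\<Sum>i\<in>{..<N} - {n}. (x(n := y)) i)"
    unfolding total_def using sum.remove[OF f m, of "x(n := y)"] by simp
  also have "(\<Sum>i\<in>{..<N} - {n}. (x(n := y)) i) = (\<Sum>i\<in>{..<N} - {n}. x i)"
    by (rule sum.cong) auto
  also have "total N x = x n + (\<Sum>i\<in>{..<N} - {n}. x i)"
    unfolding total_def using sum.remove[OF f m, of x] by simp
  ultimately show ?thesis by (simp add: fun_upd_def)
qed

lemma producer_tangent:
  fixes p :: "real \<Rightarrow> real" and Cn :: "real \<Rightarrow> real"
  assumes d: "0 < \<delta>" "\<delta> \<le> 1" and al: "0 < \<alpha>" and be: "0 < \<beta>"
    and p: "p = (\<lambda>q. max (\<alpha> - \<beta> * q powr \<delta>) 0)"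
    and cv: "convex_on {0..} Cn" and dif: "\<forall>x>0. Cn differentiable at x"
    and X: "0 < X" and aX: "\<alpha> - \<beta> * X powr \<delta> > 0" and xn: "0 < xn"
    and eq: "\<And>y. 0 \<le> y \<Longrightarrow> y * p (X - xn + y) - Cn y \<le> xn * p X - Cn xn"
    and y: "0 \<le> y"
  shows "Cn y \<ge> Cn xn + (p X - \<beta> * \<delta> * X powr (\<delta> - 1) * xn) * (y - xn)"
proof -
  define q0 where "q0 = (\<alpha> / \<beta>) powr (1 / \<delta>)"
  have q0d: "q0 powr \<delta> = \<alpha> / \<beta>" unfolding q0_def using d al be by (simp add: powr_powr)
  have q00: "0 \<le> q0" unfolding q0_def by simp
  have Xq0: "X < q0"
  proof -
    have "\<beta> * X powr \<delta> < \<beta> * q0 powr \<delta>" using aX be q0d by (simp add: field_simps)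
    then have "X powr \<delta> < q0 powr \<delta>" using be by simp
    then show ?thesis using powr_less_iff_base[OF d(1)] X q00 by simp
  qed
  define s where "s = \<beta> * \<delta> * X powr (\<delta> - 1)"
  have Dp0: "((\<lambda>q. \<alpha> - \<beta> * q powr \<delta>) has_real_derivative - (\<beta> * (\<delta> * X powr (\<delta> - 1)))) (at X)"
    using X by (auto intro!: derivative_eq_intros has_real_derivative_powr)
  have Dp: "(p has_real_derivative - s) (at X)"
  proof (rule has_field_derivative_transform_within_open[OF _ _ _])
    show "((\<lambda>q. \<alpha> - \<beta> * q powr \<delta>) has_real_derivative - s) (at X)"
      using Dp0 unfolding s_def by (simp add: mult.assoc)
    show "open {0<..<q0}" by simp
    show "X \<in> {0<..<q0}" using X Xq0 by simp
    fix q assume q: "q \<in> {0<..<q0}"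
    then have "q powr \<delta> < q0 powr \<delta>" using powr_less_iff_base[OF d(1)] q00 by auto
    then have "\<beta> * q powr \<delta> < \<alpha>" using q0d be by (simp add: field_simps)
    then show "\<alpha> - \<beta> * q powr \<delta> = p q" unfolding p by simp
  qed
  define h where "h = (\<lambda>y. y * p (X - xn + y) - Cn y)"
  have DC: "(Cn has_real_derivative deriv Cn xn) (at xn)"
    using dif xn DERIV_deriv_iff_real_differentiable by blast
  have Dsh: "((\<lambda>y. p (X - xn + y)) has_real_derivative - s * 1) (at xn)"
  proof (rule DERIV_chain2[where f = p and g = "\<lambda>y. X - xn + y"])
    show "(p has_real_derivative - s) (at (X - xn + xn))" using Dp by simp
    show "((\<lambda>y. X - xn + y) has_real_derivative 1) (at xn)"
      by (auto intro!: derivative_eq_intros)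
  qed
  have Dh: "(h has_real_derivative (1 * p (X - xn + xn) + (- s * 1) * xn) - deriv Cn xn) (at xn)"
    unfolding h_def by (intro DERIV_diff DC DERIV_mult[OF DERIV_ident Dsh])
  have "(1 * p (X - xn + xn) + (- s * 1) * xn) - deriv Cn xn = 0"
  proof (rule DERIV_local_max[OF Dh xn])
    show "\<forall>y. \<bar>xn - y\<bar> < xn \<longrightarrow> h y \<le> h xn"
    proof (intro allI impI)
      fix y assume "\<bar>xn - y\<bar> < xn"
      then have "0 \<le> y" by simp
      then show "h y \<le> h xn" unfolding h_def using eq by simp
    qed
  qed
  then have der: "deriv Cn xn = p X - s * xn" by simp
  have "Cn y - Cn xn \<ge> deriv Cn xn * (y - xn)"
    using y xn
    by (intro convex_on_imp_above_tangent[OF cv]) (auto intro: DERIV_subset[OF DC])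
  then show ?thesis unfolding der s_def by (simp add: algebra_simps)
qed

lemma nonproducer:
  fixes p :: "real \<Rightarrow> real" and Cn :: "real \<Rightarrow> real"
  assumes d: "0 < \<delta>" "\<delta> \<le> 1" and be: "0 < \<beta>"
    and p: "p = (\<lambda>q. max (\<alpha> - \<beta> * q powr \<delta>) 0)"
    and cv: "convex_on {0..} Cn" and C0: "Cn 0 = 0"
    and X: "0 < X" and aX: "\<alpha> - \<beta> * X powr \<delta> \<ge> 0" and M: "0 < M"
    and eq: "\<And>y. 0 \<le> y \<Longrightarrow> y * p (X + y) - Cn y \<le> 0"
    and y: "0 \<le> y"
  shows "Cn y \<ge> (p X - \<beta> * \<delta> * X powr (\<delta> - 1) * M) * y"
proof (cases "y = 0")
  case True then show ?thesis using C0 by simp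
next
  case False
  then have y0: "0 < y" using y by simp
  define s where "s = \<beta> * \<delta> * X powr (\<delta> - 1)"
  have s0: "0 \<le> s" unfolding s_def using be d by simp
  define g where "g = p X - s * M"
  define h where "h = min y M"
  have h0: "0 < h" and hy: "h \<le> y" and hM: "h \<le> M" unfolding h_def using y0 M by auto
  have pX: "p X = \<alpha> - \<beta> * X powr \<delta>" unfolding p using aX by simp
  have "(X + h) powr \<delta> \<le> X powr \<delta> + \<delta> * X powr (\<delta> - 1) * ((X + h) - X)"
    using powr_tangent[OF d X, of "X + h"] X h0 by simp
  then have "\<beta> * (X + h) powr \<delta> \<le> \<beta> * (X powr \<delta> + \<delta> * X powr (\<delta> - 1) * h)"
    using be by (intro mult_left_mono) auto
  then have "\<alpha> - \<beta> * (X + h) powr \<delta> \<ge> p X - s * h" unfolding pX s_def by (simp add: algebra_simps)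
  moreover have "s * h \<le> s * M" using s0 hM by (intro mult_left_mono) auto
  ultimately have "p (X + h) \<ge> g" unfolding g_def p by simp
  then have "h * g \<le> h * p (X + h)" using h0 by (intro mult_left_mono) auto
  also have "\<dots> \<le> Cn h" using eq[of h] h0 by simp
  also have "\<dots> \<le> (h / y) * Cn y" using convex_quot_mono[OF cv C0 h0 hy] .
  finally have "h * g \<le> (h / y) * Cn y" .
  then have "y * (h * g) \<le> y * ((h / y) * Cn y)" using y0 by (intro mult_left_mono) auto
  then have "h * (g * y) \<le> h * Cn y" using y0 by (simp add: field_simps)
  then have "g * y \<le> Cn y" using h0 by simp
  then show ?thesis unfolding g_def s_def .
qed

lemma gap_bound:
  fixes p :: "real \<Rightarrow> real"
  assumes d: "0 < \<delta>" "\<delta> \<le> 1" and al: "0 < \<alpha>" and be: "0 < \<beta>"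
    and p: "p = (\<lambda>q. max (\<alpha> - \<beta> * q powr \<delta>) 0)"
    and X: "0 < X" and aX: "\<alpha> - \<beta> * X powr \<delta> > 0" and M: "0 < M" "M \<le> X"
    and g0: "0 \<le> (\<alpha> - \<beta> * X powr \<delta>) - \<beta> * \<delta> * X powr (\<delta> - 1) * M"
    and Y: "0 \<le> Y"
  shows "integral {0..Y} p - ((\<alpha> - \<beta> * X powr \<delta>) - \<beta> * \<delta> * X powr (\<delta> - 1) * M) * Y
     \<le> integral {0..X} p - ((\<alpha> - \<beta> * X powr \<delta>) - \<beta> * \<delta> * X powr (\<delta> - 1) * M) * X
        + (\<delta> + 1) powr ((1 - \<delta>) / \<delta>) / 2 * (\<beta> * \<delta> * X powr (\<delta> - 1)) * M^2"
proof -
  define s where "s = \<beta> * \<delta> * X powr (\<delta> - 1)"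
  define a where "a = \<alpha> - \<beta> * X powr \<delta>"
  define g where "g = a - s * M"
  define c where "c = (\<delta> + 1) powr ((1 - \<delta>) / \<delta>)"
  define A where "A = \<alpha> - g"
  define Ys where "Ys = (A / \<beta>) powr (1 / \<delta>)"
  have s0: "0 < s" unfolding s_def using be d X by simp
  have gg: "0 \<le> g" using g0 unfolding g_def a_def s_def .
  have A: "A = \<beta> * X powr \<delta> + s * M" unfolding A_def g_def a_def by simp
  have A0: "0 < A" unfolding A using be X s0 M by (simp add: add_pos_pos)
  have Ysd: "Ys powr \<delta> = A / \<beta>" unfolding Ys_def using d A0 be by (simp add: powr_powr)
  have Ys0: "0 < Ys" unfolding Ys_def using A0 be by simp
  have XYs: "X \<le> Ys"
  proof -
    have "X powr \<delta> \<le> A / \<beta>" unfolding A using be s0 M by (simp add: field_simps)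
    then show ?thesis using powr_le_iff_base[OF d(1), of X Ys] X Ys0 Ysd by simp
  qed
  have cont: "continuous_on {0..} p" unfolding p by (rule p_cont[OF d(1)])
  have opt: "integral {0..Y} p - g * Y \<le> integral {0..Ys} p - g * Ys"
  proof (rule P_opt[OF cont _ Y])
    show "0 \<le> Ys" using Ys0 by simp
    fix q :: real
    assume q: "0 \<le> q" "q \<le> Ys"
    then have "q powr \<delta> \<le> Ys powr \<delta>" using d by (intro powr_mono2) auto
    then have "\<beta> * q powr \<delta> \<le> A" using Ysd be by (simp add: field_simps)
    then show "g \<le> p q" unfolding p A_def by simp
  next
    fix q :: real
    assume q: "Ys \<le> q"
    then have "Ys powr \<delta> \<le> q powr \<delta>" using d Ys0 by (intro powr_mono2) auto
    then have "A \<le> \<beta> * q powr \<delta>" using Ysd be by (simp add: field_simps)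
    then show "p q \<le> g" unfolding p A_def using gg by simp
  qed
  have PYs: "integral {0..Ys} p = \<alpha> * Ys - \<beta> * Ys powr (\<delta> + 1) / (\<delta> + 1)"
    unfolding p using Ysd gg be d Ys0 by (intro P_explicit) (auto simp: A_def)
  have PX: "integral {0..X} p = \<alpha> * X - \<beta> * X powr (\<delta> + 1) / (\<delta> + 1)"
    unfolding p using aX be d X by (intro P_explicit) auto
  have trap: "(Ys - X) * (Ys powr \<delta> + X powr \<delta>) / 2 \<le> (Ys powr (\<delta>+1) - X powr (\<delta>+1)) / (\<delta>+1)"
    using trapezoid[OF d X XYs] .
  have diffd: "\<beta> * (Ys powr \<delta> - X powr \<delta>) = s * M" using Ysd A be by (simp add: field_simps)
  have step1: "integral {0..Ys} p - g * Ys - (integral {0..X} p - g * X) \<le> (Ys - X) * (s * M) / 2"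
  proof -
    have "integral {0..Ys} p - g * Ys - (integral {0..X} p - g * X)
        = A * (Ys - X) - \<beta> * ((Ys powr (\<delta>+1) - X powr (\<delta>+1)) / (\<delta>+1))"
      unfolding PYs PX A_def by (simp add: algebra_simps add_divide_distrib diff_divide_distrib)
    also have "\<dots> \<le> A * (Ys - X) - \<beta> * ((Ys - X) * (Ys powr \<delta> + X powr \<delta>) / 2)"
      using mult_left_mono[OF trap, of \<beta>] be by simp
    also have "\<dots> = (Ys - X) * (\<beta> * (Ys powr \<delta> - X powr \<delta>)) / 2"
      using Ysd be by (simp add: field_simps)
    finally show ?thesis unfolding diffd .
  qed
  have step2: "Ys - X \<le> c * M"
  proof -
    have tan: "X powr \<delta> \<le> Ys powr \<delta> + \<delta> * Ys powr (\<delta> - 1) * (X - Ys)"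
      using powr_tangent[OF d Ys0 X] .
    then have "\<beta> * (\<delta> * Ys powr (\<delta> - 1) * (Ys - X)) \<le> \<beta> * (Ys powr \<delta> - X powr \<delta>)"
      using be by (intro mult_left_mono) (auto simp: algebra_simps)
    also have "\<dots> = \<beta> * (\<delta> * (X powr (\<delta> - 1) * M))" unfolding diffd s_def by simp
    finally have t1: "Ys powr (\<delta> - 1) * (Ys - X) \<le> X powr (\<delta> - 1) * M" using be d by simp
    have XX: "X * X powr (\<delta> - 1) = X powr \<delta>" using X by (simp add: powr_diff field_simps)
    have sX: "s * X = \<beta> * \<delta> * X powr \<delta>"
    proof -
      have "s * X = \<beta> * \<delta> * (X * X powr (\<delta> - 1))" by (simp add: s_def algebra_simps)
      then show ?thesis by (simp add: XX)
    qed
    have "s * M \<le> s * X" using s0 M by simp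
    then have "\<beta> * Ys powr \<delta> \<le> \<beta> * ((1 + \<delta>) * X powr \<delta>)" using diffd sX
      by (simp add: algebra_simps)
    then have rat: "Ys powr \<delta> \<le> (1 + \<delta>) * X powr \<delta>" using be by simp
    have "(Ys / X) powr \<delta> \<le> 1 + \<delta>" using rat X by (simp add: powr_divide divide_le_eq)
    then have "((Ys / X) powr \<delta>) powr ((1 - \<delta>) / \<delta>) \<le> (1 + \<delta>) powr ((1 - \<delta>) / \<delta>)"
      using d by (intro powr_mono2) auto
    then have cb: "(Ys / X) powr (1 - \<delta>) \<le> c" unfolding c_def using d by (simp add: powr_powr add.commute)
    have idt: "(Ys / X) powr (1 - \<delta>) * Ys powr (\<delta> - 1) = X powr (\<delta> - 1)"
      using X Ys0 by (simp add: powr_divide powr_diff field_simps)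
    have "X powr (\<delta> - 1) * M \<le> c * Ys powr (\<delta> - 1) * M"
      using cb M Ys0 unfolding idt[symmetric] by (intro mult_right_mono) (auto intro: mult_right_mono)
    with t1 have "Ys powr (\<delta> - 1) * (Ys - X) \<le> Ys powr (\<delta> - 1) * (c * M)" by (simp add: algebra_simps)
    then show ?thesis using Ys0 by simp
  qed
  have "(Ys - X) * (s * M) / 2 \<le> (c * M) * (s * M) / 2"
    using step2 s0 M by (intro divide_right_mono mult_right_mono) auto
  with step1 opt have "integral {0..Y} p - g * Y \<le> integral {0..X} p - g * X + c / 2 * s * M^2"
    by (simp add: power2_eq_square algebra_simps)
  then show ?thesis unfolding g_def a_def s_def c_def .
qed

theorem mainTheorem15:
  fixes N :: nat and C :: "nat \<Rightarrow> real \<Rightarrow> real" and \<alpha> \<beta> \<delta> :: real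
    and p :: "real \<Rightarrow> real" and x xS :: "nat \<Rightarrow> real"
  assumes "N \<ge> 1"
    and "\<alpha> > 0" and "\<beta> > 0" and "0 < \<delta>" and "\<delta> \<le> 1"
    and "p = (\<lambda>q. max (\<alpha> - \<beta> * q powr \<delta>) 0)"
    and "assumption1 C N" and "assumption3 p C N" and "assumption4 p C N"
    and "cournot_equilibrium p C N x"
    and "social_optimum p C N xS"
  shows "efficiency p C N xS x \<ge> f_bound ((\<delta> + 1) powr ((1 - \<delta>) / \<delta>))"
proof -
  note N1 = assms(1) and al = assms(2) and be = assms(3) and d = assms(4,5) and p = assms(6)
  have A1: "\<And>n. n < N \<Longrightarrow> convex_on {0..} (C n) \<and> mono_on {0..} (C n) \<and>
      (\<forall>x>0. C n differentiable at x) \<and> C n 0 = 0"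
    using assms(7) unfolding assumption1_def by blast
  have Cnn: "\<And>n y. n < N \<Longrightarrow> 0 \<le> y \<Longrightarrow> 0 \<le> C n y"
  proof -
    fix n y assume "n < N" "0 \<le> (y::real)"
    then have "C n 0 \<le> C n y" using A1[of n] mono_onD[of "{0..}" "C n" 0 y] by auto
    then show "0 \<le> C n y" using A1[of n] \<open>n < N\<close> by simp
  qed
  have fx: "\<And>n. n < N \<Longrightarrow> 0 \<le> x n" using assms(10) unfolding cournot_equilibrium_def feasible_def by blast
  have fxS: "\<And>n. n < N \<Longrightarrow> 0 \<le> xS n" using assms(11) unfolding social_optimum_def feasible_def by blast
  define X where "X = total N x"
  define XS where "XS = total N xS"
  have eqm: "\<And>n y. n < N \<Longrightarrow> 0 \<le> y \<Longrightarrow> y * p (X - x n + y) - C n y \<le> x n * p X - C n (x n)"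
  proof -
    fix n y assume "n < N" "0 \<le> (y::real)"
    then have "payoff p C N (x(n := y)) n \<le> payoff p C N x n"
      using assms(10) unfolding cournot_equilibrium_def by blast
    then show "y * p (X - x n + y) - C n y \<le> x n * p X - C n (x n)"
      unfolding payoff_def X_def using total_upd[OF \<open>n < N\<close>, of x y] by simp
  qed
  have Wle: "welfare p C N x \<le> welfare p C N xS"
    using assms(10,11) unfolding cournot_equilibrium_def social_optimum_def by blast
  have Wx: "welfare p C N x = integral {0..X} p - (\<Sum>n<N. C n (x n))" unfolding welfare_def X_def ..
  have WxS: "welfare p C N xS = integral {0..XS} p - (\<Sum>n<N. C n (xS n))" unfolding welfare_def XS_def ..
  have X0: "0 \<le> X" unfolding X_def total_def using fx by (auto intro!: sum_nonneg)
  have XS0: "0 \<le> XS" unfolding XS_def total_def using fxS by (auto intro!: sum_nonneg)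
  define c where "c = (\<delta> + 1) powr ((1 - \<delta>) / \<delta>)"
  have c0: "0 < c" unfolding c_def using d by simp
  have cont: "continuous_on {0..} p" unfolding p by (rule p_cont[OF d(1)])
  show ?thesis
  proof (cases "X = 0")
    case True
    have x0: "\<And>n. n < N \<Longrightarrow> x n = 0"
    proof -
      fix n assume n: "n < N"
      have "sum x {..<N} = 0" using True unfolding X_def total_def .
      then show "x n = 0" using sum_nonneg_eq_0_iff[of "{..<N}" x] fx n by auto
    qed
    have p0: "p 0 = \<alpha>" unfolding p using al by simp
    have fin: "finite (((\<lambda>n. right_deriv0 (C n)) ` {..<N}))" by simp
    have ne: "((\<lambda>n. right_deriv0 (C n)) ` {..<N}) \<noteq> {}" using N1 by (auto simp: lessThan_empty_iff)
    obtain n0 where n0: "n0 < N" "right_deriv0 (C n0) = min_marginal0 C N"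
      using Min_in[OF fin ne] unfolding min_marginal0_def by auto
    have lt: "right_deriv0 (C n0) < \<alpha>" using assms(9) n0 p0 unfolding assumption4_def by simp
    have D: "((\<lambda>h. (C n0 h - C n0 0) / (h - 0)) \<longlongrightarrow> right_deriv0 (C n0)) (at_right 0)"
      using rd0[of "C n0"] A1[OF n0(1)] unfolding has_field_derivative_iff by blast
    have "(p \<longlongrightarrow> p 0) (at 0 within {0..})"
      using cont unfolding continuous_on_def by auto
    then have Pl: "(p \<longlongrightarrow> \<alpha>) (at_right 0)" unfolding p0
      by (rule tendsto_within_subset) auto
    have ev: "eventually (\<lambda>h. p h \<le> (C n0 h - C n0 0) / (h - 0)) (at_right 0)"
      unfolding eventually_at_right_field
    proof (intro exI[of _ 1] conjI allI impI)
      fix h :: real assume h: "0 < h" "h < 1"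
      have "h * p (X - x n0 + h) - C n0 h \<le> x n0 * p X - C n0 (x n0)"
        using eqm[OF n0(1)] h by simp
      then have "h * p h \<le> C n0 h" using x0[OF n0(1)] True A1[OF n0(1)] by simp
      then show "p h \<le> (C n0 h - C n0 0) / (h - 0)" using h A1[OF n0(1)] by (simp add: le_divide_eq mult.commute)
    qed simp
    have "\<alpha> \<le> right_deriv0 (C n0)" by (rule tendsto_le[OF _ D Pl ev]) simp
    with lt show ?thesis by simp
  next
    case False
    then have Xp: "0 < X" using X0 by simp
    show ?thesis
    proof (cases "\<alpha> - \<beta> * X powr \<delta> > 0")
      case True
      note aX = True
      define s where "s = \<beta> * \<delta> * X powr (\<delta> - 1)"
      define a where "a = \<alpha> - \<beta> * X powr \<delta>"
      have s0: "0 < s" unfolding s_def using be d Xp by simp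
      have pX: "p X = a" unfolding p a_def using aX by simp
      define M where "M = Max (x ` {..<N})"
      have finx: "finite (x ` {..<N})" by simp
      have nex: "x ` {..<N} \<noteq> {}" using N1 by (auto simp: lessThan_empty_iff)
      obtain n0 where n0: "n0 < N" "x n0 = M" using Max_in[OF finx nex] unfolding M_def by auto
      have Mge: "\<And>n. n < N \<Longrightarrow> x n \<le> M" unfolding M_def using finx by auto
      have M0: "0 < M"
      proof (rule ccontr)
        assume "\<not> 0 < M"
        then have "\<And>n. n < N \<Longrightarrow> x n = 0" using Mge fx by (meson antisym not_less order_trans)
        then have "X = 0" unfolding X_def total_def by simp
        then show False using Xp by simp
      qed
      have MX: "M \<le> X" unfolding X_def total_def n0(2)[symmetric]
        using n0(1) fx by (intro member_le_sum) auto
      define g where "g = a - s * M"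
      have tang: "\<And>n y. n < N \<Longrightarrow> 0 < x n \<Longrightarrow> 0 \<le> y \<Longrightarrow> C n y \<ge> C n (x n) + (a - s * x n) * (y - x n)"
      proof -
        fix n y assume n: "n < N" and xn: "0 < x n" and y: "0 \<le> (y::real)"
        show "C n y \<ge> C n (x n) + (a - s * x n) * (y - x n)"
          using producer_tangent[OF d al be p _ _ Xp aX xn eqm[OF n] y] A1[OF n] pX
          unfolding s_def by simp
      qed
      have g0: "0 \<le> g"
      proof -
        have "C n0 0 \<ge> C n0 M + (a - s * M) * (0 - M)" using tang[OF n0(1) _ order_refl] n0 M0 by simp
        then have "(a - s * M) * M \<ge> C n0 M" using A1[OF n0(1)] by (simp add: algebra_simps)
        moreover have "C n0 M \<ge> 0" using Cnn[OF n0(1)] M0 by simp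
        ultimately have "0 \<le> (a - s * M) * M" by simp
        then show ?thesis unfolding g_def using M0 by (simp add: zero_le_mult_iff)
      qed
      have nonp: "\<And>n y. n < N \<Longrightarrow> x n = 0 \<Longrightarrow> 0 \<le> y \<Longrightarrow> C n y \<ge> g * y"
      proof -
        fix n y assume n: "n < N" and xn: "x n = 0" and y: "0 \<le> (y::real)"
        have e: "\<And>y. 0 \<le> y \<Longrightarrow> y * p (X + y) - C n y \<le> 0"
          using eqm[OF n] xn A1[OF n] by simp
        show "C n y \<ge> g * y"
          using nonproducer[OF d be p _ _ Xp _ M0 e y] A1[OF n] aX pX
          unfolding g_def s_def by simp
      qed
      define G where "G = (\<lambda>n. if 0 < x n then a - s * x n else g)"
      have Gt: "\<And>n y. n < N \<Longrightarrow> 0 \<le> y \<Longrightarrow> C n y \<ge> C n (x n) + G n * (y - x n)"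
      proof -
        fix n y assume n: "n < N" and y: "0 \<le> (y::real)"
        show "C n y \<ge> C n (x n) + G n * (y - x n)"
        proof (cases "0 < x n")
          case True then show ?thesis unfolding G_def using tang[OF n True y] by simp
        next
          case False
          then have "x n = 0" using fx[OF n] by simp
          then show ?thesis unfolding G_def using nonp[OF n _ y] A1[OF n] by simp
        qed
      qed
      have Gg: "\<And>n. n < N \<Longrightarrow> g \<le> G n"
      proof -
        fix n assume n: "n < N"
        have "s * x n \<le> s * M" using Mge[OF n] s0 by simp
        then show "g \<le> G n" unfolding G_def g_def by simp
      qed
      have Gx: "\<And>n. n < N \<Longrightarrow> G n * x n = a * x n - s * (x n)^2"
      proof -
        fix n assume n: "n < N"
        show "G n * x n = a * x n - s * (x n)^2"
        proof (cases "0 < x n")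
          case True then show ?thesis unfolding G_def by (simp add: power2_eq_square algebra_simps)
        next
          case False then have "x n = 0" using fx[OF n] by simp
          then show ?thesis by simp
        qed
      qed
      define Q where "Q = (\<Sum>n<N. (x n)^2)"
      have S1: "(\<Sum>n<N. C n (x n)) \<le> a * X - s * Q"
      proof -
        have "(\<Sum>n<N. C n (x n)) \<le> (\<Sum>n<N. a * x n - s * (x n)^2)"
        proof (rule sum_mono)
          fix n assume "n \<in> {..<N}"
          then have n: "n < N" by simp
          have "C n 0 \<ge> C n (x n) + G n * (0 - x n)" using Gt[OF n order_refl] .
          then show "C n (x n) \<le> a * x n - s * (x n)^2" using A1[OF n] Gx[OF n] by simp
        qed
        also have "\<dots> = a * X - s * Q" unfolding X_def total_def Q_def
          by (simp add: sum_subtractf sum_distrib_left)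
        finally show ?thesis .
      qed
      have S2: "(\<Sum>n<N. C n (xS n)) \<ge> (\<Sum>n<N. C n (x n)) + g * XS - (a * X - s * Q)"
      proof -
        have "(\<Sum>n<N. C n (x n) + g * xS n - (a * x n - s * (x n)^2)) \<le> (\<Sum>n<N. C n (xS n))"
        proof (rule sum_mono)
          fix n assume "n \<in> {..<N}"
          then have n: "n < N" by simp
          have "C n (xS n) \<ge> C n (x n) + G n * (xS n - x n)" using Gt[OF n fxS[OF n]] .
          moreover have "g * xS n \<le> G n * xS n" using Gg[OF n] fxS[OF n] by (simp add: mult_right_mono)
          ultimately show "C n (x n) + g * xS n - (a * x n - s * (x n)^2) \<le> C n (xS n)"
            using Gx[OF n] by (simp add: algebra_simps)
        qed
        moreover have "(\<Sum>n<N. C n (x n) + g * xS n - (a * x n - s * (x n)^2))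
            = (\<Sum>n<N. C n (x n)) + g * XS - (a * X - s * Q)"
          unfolding X_def XS_def total_def Q_def
          by (simp add: sum.distrib sum_subtractf sum_distrib_left)
        ultimately show ?thesis by simp
      qed
      have QM: "M^2 \<le> Q" unfolding Q_def n0(2)[symmetric]
        using n0(1) by (intro member_le_sum) auto
      have QX: "Q \<le> M * X"
      proof -
        have "Q \<le> (\<Sum>n<N. M * x n)" unfolding Q_def
        proof (rule sum_mono)
          fix n assume "n \<in> {..<N}"
          then have n: "n < N" by simp
          show "(x n)^2 \<le> M * x n" using Mge[OF n] fx[OF n]
            by (simp add: power2_eq_square mult_right_mono)
        qed
        then show ?thesis unfolding X_def total_def by (simp add: sum_distrib_left)
      qed
      have PX: "integral {0..X} p = \<alpha> * X - \<beta> * X powr (\<delta> + 1) / (\<delta> + 1)"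
        unfolding p using aX be d Xp by (intro P_explicit) auto
      have PXa: "integral {0..X} p - a * X \<ge> s * X^2 / 2"
      proof -
        have e1: "X powr (\<delta> + 1) = X powr \<delta> * X" using Xp by (simp add: powr_add)
        have e2: "X powr (\<delta> - 1) * X^2 = X powr \<delta> * X" using Xp
          by (simp add: powr_diff power2_eq_square)
        define K where "K = \<beta> * X powr \<delta> * X"
        have K0: "0 < K" unfolding K_def using be Xp by simp
        have q1: "integral {0..X} p - a * X = K * (\<delta> / (\<delta> + 1))"
          unfolding PX a_def K_def e1 using d by (simp add: field_simps)
        have q2: "s * X^2 / 2 = K * (\<delta> / 2)"
          unfolding s_def K_def using e2 by (simp add: algebra_simps)
        have "\<delta> / 2 \<le> \<delta> / (\<delta> + 1)" using d by (intro divide_left_mono) auto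
        then have "K * (\<delta> / 2) \<le> K * (\<delta> / (\<delta> + 1))" using K0 by (intro mult_left_mono) auto
        then show ?thesis using q1 q2 by linarith
      qed
      have gap: "integral {0..XS} p - g * XS \<le> integral {0..X} p - g * X + c / 2 * s * M^2"
        using gap_bound[OF d al be p Xp aX M0 MX _ XS0] g0 unfolding g_def a_def s_def c_def by simp
      define w where "w = welfare p C N x"
      define W where "W = welfare p C N xS"
      have wA: "w \<ge> s * (X^2 / 2 + Q)" unfolding w_def Wx using S1 PXa by (simp add: algebra_simps)
      have WB: "W \<le> w + s * (M * X + c * M^2 / 2 - Q)"
        unfolding W_def w_def WxS Wx using S2 gap unfolding g_def by (simp add: algebra_simps)
      have wW: "w \<le> W" unfolding w_def W_def using Wle .
      have w0: "0 < w"
      proof -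
        have "0 < X^2 / 2" using Xp by simp
        moreover have "0 \<le> M^2" by simp
        ultimately have "0 < X^2 / 2 + Q" using QM by linarith
        then have "0 < s * (X^2 / 2 + Q)" using s0 by simp
        then show ?thesis using wA by simp
      qed
      have W0: "0 < W" using w0 wW by simp
      define Den where "Den = X^2 + 2 * M * X + c * M^2"
      have Den0: "0 < Den" unfolding Den_def using Xp M0 c0 by (intro add_pos_pos) auto
      have key: "(X^2 + 2 * M^2) * (s * (M * X + c * M^2 / 2 - Q)) \<le> (2 * M * X + c * M^2 - 2 * M^2) * w"
      proof -
        have nn: "0 \<le> 2 * M * X + c * M^2 - 2 * M^2"
        proof -
          have "M * M \<le> M * X" using MX M0 by simp
          moreover have "0 \<le> c * (M * M)" using c0 by simp
          ultimately show ?thesis by (simp add: power2_eq_square algebra_simps)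
        qed
        have f1: "(2 * M * X + c * M^2 - 2 * M^2) * (s * (X^2 / 2 + Q)) \<le> (2 * M * X + c * M^2 - 2 * M^2) * w"
          using wA nn by (rule mult_left_mono)
        have f2: "(2 * M * X + c * M^2 - 2 * M^2) * (s * (X^2 / 2 + Q))
            - (X^2 + 2 * M^2) * (s * (M * X + c * M^2 / 2 - Q)) = s * ((Q - M^2) * Den)"
          unfolding Den_def by (simp add: algebra_simps power2_eq_square)
        have f3: "0 \<le> s * ((Q - M^2) * Den)" using s0 QM Den0 by simp
        have gen: "\<And>A B Cc D::real. A \<le> B \<Longrightarrow> A - Cc = D \<Longrightarrow> 0 \<le> D \<Longrightarrow> Cc \<le> B" by linarith
        show ?thesis by (rule gen[OF f1 f2 f3])
      qed
      define R where "R = (X^2 + 2 * M^2) / Den"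
      have "(X^2 + 2 * M^2) * W \<le> (X^2 + 2 * M^2) * (w + s * (M * X + c * M^2 / 2 - Q))"
        using WB by (intro mult_left_mono) auto
      also have "\<dots> \<le> Den * w" using key unfolding Den_def by (simp add: algebra_simps)
      finally have "R * W \<le> w" unfolding R_def using Den0 by (simp add: divide_le_eq mult.commute)
      then have effR: "R \<le> efficiency p C N xS x"
        unfolding efficiency_def w_def[symmetric] W_def[symmetric] using W0 by (simp add: le_divide_eq)
      have dd: "\<And>k a b :: real. k \<noteq> 0 \<Longrightarrow> (a/k)/(b/k) = a/b"
        by (simp add: divide_divide_eq_left divide_divide_eq_right)
      have e1: "(X/M)^2 + 2 = (X^2 + 2*M^2) / M^2" using M0 by (simp add: field_simps power2_eq_square)
      have e2: "(X/M)^2 + 2 * (X/M) + c = Den / M^2" unfolding Den_def using M0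
        by (simp add: field_simps power2_eq_square)
      have Rf: "R = ((X/M)^2 + 2) / ((X/M)^2 + 2 * (X/M) + c)"
        unfolding e1 e2 R_def using M0 by (simp add: dd)
      have "1 \<le> X / M" using MX M0 by simp
      then have "f_bound c \<le> R" unfolding Rf by (rule fbound_le[OF c0])
      then show ?thesis using effR unfolding c_def by simp
    next
      case False
      have pX: "p X = 0" unfolding p using False by simp
      have Cx0: "\<And>n. n < N \<Longrightarrow> C n (x n) = 0"
      proof -
        fix n assume n: "n < N"
        have "0 * p (X - x n + 0) - C n 0 \<le> x n * p X - C n (x n)" using eqm[OF n order_refl] by simp
        then have "C n (x n) \<le> 0" using pX A1[OF n] by simp
        then show "C n (x n) = 0" using Cnn[OF n fx[OF n]] by simp
      qed
      have WX: "welfare p C N x = integral {0..X} p" unfolding Wx using Cx0 by simp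
      have Pmax: "\<And>Y. 0 \<le> Y \<Longrightarrow> integral {0..Y} p \<le> integral {0..X} p"
      proof -
        fix Y :: real assume Y: "0 \<le> Y"
        have "integral {0..Y} p - 0 * Y \<le> integral {0..X} p - 0 * X"
        proof (rule P_opt[OF cont X0 Y])
          fix q :: real show "0 \<le> p q" unfolding p by simp
        next
          fix q :: real assume "X \<le> q"
          then have "X powr \<delta> \<le> q powr \<delta>" using X0 d by (intro powr_mono2) auto
          then have "\<beta> * X powr \<delta> \<le> \<beta> * q powr \<delta>" using be by simp
          then show "p q \<le> 0" unfolding p using False by simp
        qed
        then show "integral {0..Y} p \<le> integral {0..X} p" by simp
      qed
      have "welfare p C N xS \<le> integral {0..XS} p"
      proof -
        have "0 \<le> (\<Sum>n<N. C n (xS n))" using Cnn fxS by (auto intro!: sum_nonneg)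
        then show ?thesis unfolding WxS by simp
      qed
      also have "\<dots> \<le> welfare p C N x" unfolding WX using Pmax[OF XS0] .
      finally have Weq: "welfare p C N xS = welfare p C N x" using Wle by simp
      define q0 where "q0 = (\<alpha> / \<beta>) powr (1 / \<delta>)"
      have q0d: "q0 powr \<delta> = \<alpha> / \<beta>" unfolding q0_def using d al be by (simp add: powr_powr)
      have q00: "0 < q0" unfolding q0_def using al be by simp
      have Pq0: "integral {0..q0} p = \<alpha> * q0 - \<beta> * q0 powr (\<delta> + 1) / (\<delta> + 1)"
        unfolding p using q0d be d q00 by (intro P_explicit) auto
      have "q0 powr (\<delta> + 1) = q0 powr \<delta> * q0" using q00 by (simp add: powr_add)
      then have "\<beta> * q0 powr (\<delta> + 1) = \<alpha> * q0" using q0d be by simp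
      then have "integral {0..q0} p = \<alpha> * q0 * (\<delta> / (\<delta> + 1))" unfolding Pq0 using d
        by (simp add: field_simps)
      moreover have "\<alpha> * q0 * (\<delta> / (\<delta> + 1)) > 0" using al q00 d by simp
      ultimately have "welfare p C N x > 0" unfolding WX using Pmax[of q0] q00 by simp
      then have "efficiency p C N xS x = 1" unfolding efficiency_def Weq by simp
      then show ?thesis using fbound_le1[OF c0] unfolding c_def by simp
    qed
  qed
qed

end
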